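(* Let $n\ge2$, let $T$ be any representation of $U'_q(\mathrm{so}_n)$ on a complex vector space $\mathcal V$ with basis $\{v_\alpha\}$, and let $\mathcal V_{\mathbf 1}$ be an $n$-dimensional space with basis $v_1,\dots,v_n$. Then the linear maps $T^\otimes(I_{j,j-1})$, $j=2,\dots,n$, on $\mathcal V^\otimes=\mathcal V_{\mathbf 1}\otimes\mathcal V$ given by $$T^\otimes(I_{j,j-1})(v_{j-1}\otimes v_\alpha)=q\,v_{j-1}\otimes T(I_{j,j-1})v_\alpha-q^{1/2}\,v_j\otimes v_\alpha,$$ $$T^\otimes(I_{j,j-1})(v_{j}\otimes v_\alpha)=q^{-1}\,v_{j}\otimes T(I_{j,j-1})v_\alpha+q^{-1/2}\,v_{j-1}\otimes v_\alpha,$$ $$T^\otimes(I_{j,j-1})(v_k\otimes v_\alpha)=v_k\otimes T(I_{j,j-1})v_\alpha\quad (k\ne j,\ k\ne j-1),$$ define a representation $T^\otimes$ of $U'_q(\mathrm{so}_n)$ on $\mathcal V^\otimes$.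
   Context: Fix $q\in\mathbb{C}$, $q\ne0,\pm1$, not a root of unity, and a square root $q^{1/2}$. The algebra $U'_q(\mathrm{so}_n)$ is the unital complex associative algebra generated by $I_{21},I_{32},\dots,I_{n,n-1}$ with relations $I_{j,j-1}^2I_{j-1,j-2}+I_{j-1,j-2}I_{j,j-1}^2-(q+q^{-1})I_{j,j-1}I_{j-1,j-2}I_{j,j-1}=-I_{j-1,j-2}$, $I_{j-1,j-2}^2I_{j,j-1}+I_{j,j-1}I_{j-1,j-2}^2-(q+q^{-1})I_{j-1,j-2}I_{j,j-1}I_{j-1,j-2}=-I_{j,j-1}$, and $[I_{i,i-1},I_{j,j-1}]=0$ if $|i-j|>1$. A representation is an algebra homomorphism into the endomorphisms of the space (determined by the images of the generators). *)

theory Defs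
  imports Complex_Main "HOL-Library.Function_Algebras"
begin

text \<open>A representation of U'_q(so_n) on a subspace Vc of a complex vector space
  (type 'v with complex scalar multiplication sc): linear maps T j (j = 2..n)
  of Vc into itself satisfying the defining relations of U'_q(so_n).\<close>

definition is_rep_Uq ::
  "complex \<Rightarrow> nat \<Rightarrow> (complex \<Rightarrow> 'v::ab_group_add \<Rightarrow> 'v) \<Rightarrow> 'v set \<Rightarrow> (nat \<Rightarrow> 'v \<Rightarrow> 'v) \<Rightarrow> bool"
where
  "is_rep_Uq q n sc Vc T \<longleftrightarrow>
     (\<forall>j\<in>{2..n}. (\<forall>x\<in>Vc. T j x \<in> Vc)
        \<and> (\<forall>x\<in>Vc. \<forall>y\<in>Vc. T j (x + y) = T j x + T j y)
        \<and> (\<forall>c. \<forall>x\<in>Vc. T j (sc c x) = sc c (T j x)))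
   \<and> (\<forall>j\<in>{3..n}. \<forall>x\<in>Vc.
        T j (T j (T (j-1) x)) + T (j-1) (T j (T j x))
          - sc (q + inverse q) (T j (T (j-1) (T j x))) = - T (j-1) x)
   \<and> (\<forall>j\<in>{3..n}. \<forall>x\<in>Vc.
        T (j-1) (T (j-1) (T j x)) + T j (T (j-1) (T (j-1) x))
          - sc (q + inverse q) (T (j-1) (T j (T (j-1) x))) = - T j x)
   \<and> (\<forall>i\<in>{2..n}. \<forall>j\<in>{2..n}. (i + 1 < j \<or> j + 1 < i) \<longrightarrow>
        (\<forall>x\<in>Vc. T i (T j x) = T j (T i x)))"

definition cvs :: "(complex \<Rightarrow> 'v::ab_group_add \<Rightarrow> 'v) \<Rightarrow> bool" where
  "cvs sc \<longleftrightarrow> (\<forall>a x y. sc a (x + y) = sc a x + sc a y)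
     \<and> (\<forall>a b x. sc (a + b) x = sc a x + sc b x)
     \<and> (\<forall>a b x. sc a (sc b x) = sc (a * b) x)
     \<and> (\<forall>x. sc 1 x = x)"

text \<open>The tensor product V_1 \<otimes> V with V_1 = span{v_1..v_n} is identified with
  V^n: an element \<Sum>k v_k \<otimes> f k is the function f :: nat \<Rightarrow> 'v, supported in {1..n}.\<close>
definition tens_space :: "nat \<Rightarrow> (nat \<Rightarrow> 'v::zero) set" where
  "tens_space n = {f. \<forall>k. k \<notin> {1..n} \<longrightarrow> f k = 0}"

definition tens_scale :: "(complex \<Rightarrow> 'v \<Rightarrow> 'v) \<Rightarrow> complex \<Rightarrow> (nat \<Rightarrow> 'v) \<Rightarrow> nat \<Rightarrow> 'v" where
  "tens_scale sc c f = (\<lambda>k. sc c (f k))"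

text \<open>T-tensor of I_{j,j-1} extended linearly from the formulas on v_k \<otimes> v_\<alpha>;
  qh is the chosen square root q^{1/2}.\<close>
definition tens_rep ::
  "complex \<Rightarrow> complex \<Rightarrow> nat \<Rightarrow> (complex \<Rightarrow> 'v::ab_group_add \<Rightarrow> 'v) \<Rightarrow> (nat \<Rightarrow> 'v \<Rightarrow> 'v)
     \<Rightarrow> nat \<Rightarrow> (nat \<Rightarrow> 'v) \<Rightarrow> nat \<Rightarrow> 'v" where
  "tens_rep q qh n sc T j f = (\<lambda>k.
     if k \<notin> {1..n} then 0
     else if k = j - 1 then sc q (T j (f k)) + sc (inverse qh) (f j)
     else if k = j then sc (inverse q) (T j (f k)) - sc qh (f (j - 1))
     else T j (f k))"

end

theory Submission
  imports Defs
begin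

fun wapp :: "(nat \<Rightarrow> 'v \<Rightarrow> 'v) \<Rightarrow> nat list \<Rightarrow> 'v \<Rightarrow> 'v" where
  "wapp T [] v = v"
| "wapp T (i # w) v = T i (wapp T w v)"

definition lc :: "(complex \<Rightarrow> 'v::ab_group_add \<Rightarrow> 'v) \<Rightarrow> (nat \<Rightarrow> 'v \<Rightarrow> 'v) \<Rightarrow> (nat \<Rightarrow> 'v)
   \<Rightarrow> (complex \<times> nat list \<times> nat) list \<Rightarrow> 'v" where
  "lc sc T f L = sum_list (map (\<lambda>(c,w,l). sc c (wapp T w (f l))) L)"

definition coeff :: "(complex \<times> nat list \<times> nat) list \<Rightarrow> nat list \<times> nat \<Rightarrow> complex" where
  "coeff L a = sum_list (map fst (filter (\<lambda>p. snd p = a) L))"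

lemma cvs_module: "cvs sc \<Longrightarrow> module sc"
  unfolding cvs_def module_def by blast

lemma lc_Nil[simp]: "lc sc T f [] = 0" by (simp add: lc_def)
lemma lc_Cons: "lc sc T f ((c,w,l) # L) = sc c (wapp T w (f l)) + lc sc T f L"
  by (simp add: lc_def)
lemma lc_add: "lc sc T f L1 + lc sc T f L2 = lc sc T f (L1 @ L2)"
  by (simp add: lc_def)

lemma lc_sc:
  assumes "module sc"
  shows "sc d (lc sc T f L) = lc sc T f (map (\<lambda>(c,w,l). (d*c,w,l)) L)"
proof (induction L)
  case Nil then show ?case using module.scale_zero_right[OF assms] by simp
next
  case (Cons p L) then show ?case
    by (cases p) (simp add: lc_Cons module.scale_right_distrib[OF assms] module.scale_scale[OF assms])
qed

lemma lc_neg: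
  assumes "module sc"
  shows "- lc sc T f L = lc sc T f (map (\<lambda>(c,w,l). (-c,w,l)) L)"
proof (induction L)
  case Nil then show ?case by simp
next
  case (Cons p L) then show ?case
    by (cases p) (simp add: lc_Cons module.scale_minus_left[OF assms])
qed

lemma lc_diff:
  assumes "module sc"
  shows "lc sc T f L1 - lc sc T f L2 = lc sc T f (L1 @ map (\<lambda>(c,w,l). (-c,w,l)) L2)"
  using lc_neg[OF assms, of T f L2] lc_add[of sc T f L1] by (metis diff_conv_add_uminus)

lemma lc_T:
  assumes add: "\<forall>x y. T i (x + y) = T i x + T i y"
    and hom: "\<forall>c x. T i (sc c x) = sc c (T i x)"
  shows "T i (lc sc T f L) = lc sc T f (map (\<lambda>(c,w,l). (c,i#w,l)) L)"
proof (induction L)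
  case Nil
  have "T i 0 = T i 0 + T i 0" using add by (metis add_0)
  then show ?case by simp
next
  case (Cons p L) then show ?case
    by (cases p) (simp add: lc_Cons add hom)
qed

lemma lc_atom:
  assumes "module sc"
  shows "f l = lc sc T f [(1,[],l)]"
  by (simp add: lc_def module.scale_one[OF assms])

lemma lc_expand:
  assumes "module sc" and "finite A"
  shows "set (map snd L) \<subseteq> A \<Longrightarrow>
    lc sc T f L = (\<Sum>a\<in>A. sc (coeff L a) (wapp T (fst a) (f (snd a))))"
proof (induction L)
  case Nil then show ?case
    by (simp add: coeff_def module.scale_zero_left[OF assms(1)])
next
  case (Cons p L)
  obtain c w l where p: "p = (c,w,l)" by (cases p) auto
  have wl: "(w,l) \<in> A" using Cons.prems p by auto
  have co: "coeff (p # L) a = (if a = (w,l) then c else 0) + coeff L a" for a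
    by (simp add: coeff_def p)
  have "(\<Sum>a\<in>A. sc (coeff (p#L) a) (wapp T (fst a) (f (snd a))))
     = (\<Sum>a\<in>A. sc (if a = (w,l) then c else 0) (wapp T (fst a) (f (snd a))))
       + (\<Sum>a\<in>A. sc (coeff L a) (wapp T (fst a) (f (snd a))))"
    by (simp add: co module.scale_left_distrib[OF assms(1)] sum.distrib)
  also have "(\<Sum>a\<in>A. sc (if a = (w,l) then c else 0) (wapp T (fst a) (f (snd a))))
      = (\<Sum>a\<in>A. if a = (w,l) then sc c (wapp T w (f l)) else 0)"
    by (rule sum.cong) (auto simp: module.scale_zero_left[OF assms(1)])
  also have "\<dots> = sc c (wapp T w (f l))"
    using wl assms(2) by simp
  finally show ?case using Cons by (simp add: p lc_Cons)
qed

lemma lc_zero: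
  assumes "module sc"
    and "\<forall>a\<in>set (map snd L). coeff L a = 0"
  shows "lc sc T f L = 0"
  using lc_expand[OF assms(1) finite_set[of "map snd L"], of L T f] assms(2)
  by (simp add: module.scale_zero_left[OF assms(1)])

lemma lc_eqI:
  assumes "module sc" and "lc sc T f R = 0"
    and "\<forall>a\<in>set (map snd (L1 @ map (\<lambda>(c,w,l). (-c,w,l)) L2 @ R)).
            coeff (L1 @ map (\<lambda>(c,w,l). (-c,w,l)) L2 @ R) a = 0"
  shows "lc sc T f L1 = lc sc T f L2"
proof -
  have "lc sc T f (L1 @ map (\<lambda>(c,w,l). (-c,w,l)) L2 @ R) = 0"
    by (rule lc_zero[OF assms(1) assms(3)])
  then have "lc sc T f L1 + lc sc T f (map (\<lambda>(c,w,l). (-c,w,l)) L2) + lc sc T f R = 0"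
    by (simp add: lc_add[symmetric] add.assoc)
  then have "lc sc T f L1 - lc sc T f L2 + lc sc T f R = 0"
    using lc_neg[OF assms(1), of T f L2] by (metis diff_conv_add_uminus)
  then show ?thesis using assms(2) by simp
qed

lemma rel_zero:
  assumes M: "module sc"
    and r: "T a (T a (T b (f l))) + T b (T a (T a (f l))) - sc (q + inverse q) (T a (T b (T a (f l)))) = - T b (f l)"
  shows "lc sc T f [(c,[a,a,b],l),(c,[b,a,a],l),(-(c*(q+inverse q)),[a,b,a],l),(c,[b],l)] = 0"
proof -
  define X where "X = T a (T a (T b (f l)))"
  define Y where "Y = T b (T a (T a (f l)))"
  define Z where "Z = T a (T b (T a (f l)))"
  define W where "W = T b (f l)"
  define d where "d = q + inverse q"
  have r': "X + Y - sc d Z + W = 0" using r unfolding X_def Y_def Z_def W_def d_def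
    by (simp add: algebra_simps)
  have e: "sc (-(c*d)) Z = - sc c (sc d Z)"
    using module.scale_minus_left[OF M] module.scale_scale[OF M] by metis
  have "lc sc T f [(c,[a,a,b],l),(c,[b,a,a],l),(-(c*(q+inverse q)),[a,b,a],l),(c,[b],l)]
      = sc c X + (sc c Y + (sc (-(c*d)) Z + (sc c W + 0)))"
    unfolding lc_def X_def Y_def Z_def W_def d_def by simp
  also have "\<dots> = sc c (X + Y - sc d Z + W)"
    unfolding e module.scale_right_distrib[OF M] module.scale_right_diff_distrib[OF M]
    by (simp add: algebra_simps)
  also have "\<dots> = 0" using r' module.scale_zero_right[OF M] by simp
  finally show ?thesis .
qed

lemma tr_app: "tens_rep q qh n sc T j g k =
     (if k \<notin> {1..n} then 0
     else if k = j - 1 then sc q (T j (g k)) + sc (inverse qh) (g j)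
     else if k = j then sc (inverse q) (T j (g k)) - sc qh (g (j - 1))
     else T j (g k))"
  by (simp add: tens_rep_def)

lemma tens_rel1:
  fixes sc :: "complex \<Rightarrow> 'v::ab_group_add \<Rightarrow> 'v" and T :: "nat \<Rightarrow> 'v \<Rightarrow> 'v"
  assumes M: "module sc" and qq: "q = qh^2" and qh0: "qh \<noteq> 0"
    and addA: "\<forall>x y. T (Suc (Suc (Suc m))) (x + y) = T (Suc (Suc (Suc m))) x + T (Suc (Suc (Suc m))) y"
    and homA: "\<forall>c x. T (Suc (Suc (Suc m))) (sc c x) = sc c (T (Suc (Suc (Suc m))) x)"
    and addB: "\<forall>x y. T (Suc (Suc m)) (x + y) = T (Suc (Suc m)) x + T (Suc (Suc m)) y"
    and homB: "\<forall>c x. T (Suc (Suc m)) (sc c x) = sc c (T (Suc (Suc m)) x)"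
    and rel: "\<forall>x. T (Suc (Suc (Suc m))) (T (Suc (Suc (Suc m))) (T (Suc (Suc m)) x))
       + T (Suc (Suc m)) (T (Suc (Suc (Suc m))) (T (Suc (Suc (Suc m))) x))
       - sc (q + inverse q) (T (Suc (Suc (Suc m))) (T (Suc (Suc m)) (T (Suc (Suc (Suc m))) x)))
       = - T (Suc (Suc m)) x"
    and n: "Suc (Suc (Suc m)) \<le> n"
  shows "tens_rep q qh n sc T (Suc (Suc (Suc m))) (tens_rep q qh n sc T (Suc (Suc (Suc m))) (tens_rep q qh n sc T (Suc (Suc m)) f)) k
       + tens_rep q qh n sc T (Suc (Suc m)) (tens_rep q qh n sc T (Suc (Suc (Suc m))) (tens_rep q qh n sc T (Suc (Suc (Suc m))) f)) k
       - sc (q + inverse q) (tens_rep q qh n sc T (Suc (Suc (Suc m))) (tens_rep q qh n sc T (Suc (Suc m)) (tens_rep q qh n sc T (Suc (Suc (Suc m))) f)) k)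
       = - tens_rep q qh n sc T (Suc (Suc m)) f k"
proof -
  note lcs = lc_T[where T=T and i="Suc (Suc (Suc m))", OF addA homA] lc_T[where T=T and i="Suc (Suc m)", OF addB homB] lc_add lc_diff[OF M] lc_neg[OF M] lc_sc[OF M]
    lc_atom[OF M, where T=T and f=f]
  consider "k = Suc m" | "k = Suc (Suc m)" | "k = Suc (Suc (Suc m))" | "k \<notin> {1..n}"
    | "k \<in> {1..n}" "k \<noteq> Suc m" "k \<noteq> Suc (Suc m)" "k \<noteq> Suc (Suc (Suc m))" by blast
  then show ?thesis
  proof cases
    case 1
    then show ?thesis using n
      apply (simp add: tr_app lcs del: lc_Nil)
      apply (rule lc_eqI[OF M, where R = "[(-q,[Suc (Suc (Suc m)),Suc (Suc (Suc m)),Suc (Suc m)],Suc m),(-q,[Suc (Suc m),Suc (Suc (Suc m)),Suc (Suc (Suc m))],Suc m),(-((-q)*(q+inverse q)),[Suc (Suc (Suc m)),Suc (Suc m),Suc (Suc (Suc m))],Suc m),(-q,[Suc (Suc m)],Suc m)]"])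
       apply (rule rel_zero[OF M]) using rel apply simp
      apply (simp add: coeff_def qq)
      apply (simp add: field_simps eval_nat_numeral qh0)
      done
  next
    case 2
    then show ?thesis using n
      apply (simp add: tr_app lcs del: lc_Nil)
      apply (rule lc_eqI[OF M, where R = "[(-q,[Suc (Suc (Suc m)),Suc (Suc (Suc m)),Suc (Suc m)],Suc (Suc m)),(-q,[Suc (Suc m),Suc (Suc (Suc m)),Suc (Suc (Suc m))],Suc (Suc m)),(-((-q)*(q+inverse q)),[Suc (Suc (Suc m)),Suc (Suc m),Suc (Suc (Suc m))],Suc (Suc m)),(-q,[Suc (Suc m)],Suc (Suc m))]"])
       apply (rule rel_zero[OF M]) using rel apply simp
      apply (simp add: coeff_def qq)
      apply (simp add: field_simps eval_nat_numeral qh0)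
      done
  next
    case 3
    then show ?thesis using n
      apply (simp add: tr_app lcs del: lc_Nil)
      apply (rule lc_eqI[OF M, where R = "[(- inverse (q^2),[Suc (Suc (Suc m)),Suc (Suc (Suc m)),Suc (Suc m)],Suc (Suc (Suc m))),(- inverse (q^2),[Suc (Suc m),Suc (Suc (Suc m)),Suc (Suc (Suc m))],Suc (Suc (Suc m))),(-((- inverse (q^2))*(q+inverse q)),[Suc (Suc (Suc m)),Suc (Suc m),Suc (Suc (Suc m))],Suc (Suc (Suc m))),(- inverse (q^2),[Suc (Suc m)],Suc (Suc (Suc m)))]"])
       apply (rule rel_zero[OF M]) using rel apply simp
      apply (simp add: coeff_def qq)
      apply (simp add: field_simps eval_nat_numeral qh0)
      done
  next
    case 4 then show ?thesis by (simp add: tr_app module.scale_zero_right[OF M])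
  next
    case 5 then show ?thesis using rel by (simp add: tr_app)
  qed
qed

lemma tens_rel2:
  fixes sc :: "complex \<Rightarrow> 'v::ab_group_add \<Rightarrow> 'v" and T :: "nat \<Rightarrow> 'v \<Rightarrow> 'v"
  assumes M: "module sc" and qq: "q = qh^2" and qh0: "qh \<noteq> 0"
    and addA: "\<forall>x y. T (Suc (Suc (Suc m))) (x + y) = T (Suc (Suc (Suc m))) x + T (Suc (Suc (Suc m))) y"
    and homA: "\<forall>c x. T (Suc (Suc (Suc m))) (sc c x) = sc c (T (Suc (Suc (Suc m))) x)"
    and addB: "\<forall>x y. T (Suc (Suc m)) (x + y) = T (Suc (Suc m)) x + T (Suc (Suc m)) y"
    and homB: "\<forall>c x. T (Suc (Suc m)) (sc c x) = sc c (T (Suc (Suc m)) x)"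
    and rel: "\<forall>x. T (Suc (Suc m)) (T (Suc (Suc m)) (T (Suc (Suc (Suc m))) x))
       + T (Suc (Suc (Suc m))) (T (Suc (Suc m)) (T (Suc (Suc m)) x))
       - sc (q + inverse q) (T (Suc (Suc m)) (T (Suc (Suc (Suc m))) (T (Suc (Suc m)) x)))
       = - T (Suc (Suc (Suc m))) x"
    and n: "Suc (Suc (Suc m)) \<le> n"
  shows "tens_rep q qh n sc T (Suc (Suc m)) (tens_rep q qh n sc T (Suc (Suc m)) (tens_rep q qh n sc T (Suc (Suc (Suc m))) f)) k
       + tens_rep q qh n sc T (Suc (Suc (Suc m))) (tens_rep q qh n sc T (Suc (Suc m)) (tens_rep q qh n sc T (Suc (Suc m)) f)) k
       - sc (q + inverse q) (tens_rep q qh n sc T (Suc (Suc m)) (tens_rep q qh n sc T (Suc (Suc (Suc m))) (tens_rep q qh n sc T (Suc (Suc m)) f)) k)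
       = - tens_rep q qh n sc T (Suc (Suc (Suc m))) f k"
proof -
  note lcs = lc_T[where T=T and i="Suc (Suc (Suc m))", OF addA homA] lc_T[where T=T and i="Suc (Suc m)", OF addB homB] lc_add lc_diff[OF M] lc_neg[OF M] lc_sc[OF M]
    lc_atom[OF M, where T=T and f=f]
  consider "k = Suc m" | "k = Suc (Suc m)" | "k = Suc (Suc (Suc m))" | "k \<notin> {1..n}"
    | "k \<in> {1..n}" "k \<noteq> Suc m" "k \<noteq> Suc (Suc m)" "k \<noteq> Suc (Suc (Suc m))" by blast
  then show ?thesis
  proof cases
    case 1
    then show ?thesis using n
      apply (simp add: tr_app lcs del: lc_Nil)
      apply (rule lc_eqI[OF M, where R = "[(-(q^2),[Suc (Suc m),Suc (Suc m),Suc (Suc (Suc m))],Suc m),(-(q^2),[Suc (Suc (Suc m)),Suc (Suc m),Suc (Suc m)],Suc m),(-((-(q^2))*(q+inverse q)),[Suc (Suc m),Suc (Suc (Suc m)),Suc (Suc m)],Suc m),(-(q^2),[Suc (Suc (Suc m))],Suc m)]"])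
       apply (rule rel_zero[OF M]) using rel apply simp
      apply (simp add: coeff_def qq)
      apply (simp add: field_simps eval_nat_numeral qh0)
      done
  next
    case 2
    then show ?thesis using n
      apply (simp add: tr_app lcs del: lc_Nil)
      apply (rule lc_eqI[OF M, where R = "[(- inverse q,[Suc (Suc m),Suc (Suc m),Suc (Suc (Suc m))],Suc (Suc m)),(- inverse q,[Suc (Suc (Suc m)),Suc (Suc m),Suc (Suc m)],Suc (Suc m)),(-((- inverse q)*(q+inverse q)),[Suc (Suc m),Suc (Suc (Suc m)),Suc (Suc m)],Suc (Suc m)),(- inverse q,[Suc (Suc (Suc m))],Suc (Suc m))]"])
       apply (rule rel_zero[OF M]) using rel apply simp
      apply (simp add: coeff_def qq)
      apply (simp add: field_simps eval_nat_numeral qh0)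
      done
  next
    case 3
    then show ?thesis using n
      apply (simp add: tr_app lcs del: lc_Nil)
      apply (rule lc_eqI[OF M, where R = "[(- inverse q,[Suc (Suc m),Suc (Suc m),Suc (Suc (Suc m))],Suc (Suc (Suc m))),(- inverse q,[Suc (Suc (Suc m)),Suc (Suc m),Suc (Suc m)],Suc (Suc (Suc m))),(-((- inverse q)*(q+inverse q)),[Suc (Suc m),Suc (Suc (Suc m)),Suc (Suc m)],Suc (Suc (Suc m))),(- inverse q,[Suc (Suc (Suc m))],Suc (Suc (Suc m)))]"])
       apply (rule rel_zero[OF M]) using rel apply simp
      apply (simp add: coeff_def qq)
      apply (simp add: field_simps eval_nat_numeral qh0)
      done
  next
    case 4 then show ?thesis by (simp add: tr_app module.scale_zero_right[OF M])
  next
    case 5 then show ?thesis using rel by (simp add: tr_app)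
  qed
qed

lemma tens_comm:
  fixes sc :: "complex \<Rightarrow> 'v::ab_group_add \<Rightarrow> 'v" and T :: "nat \<Rightarrow> 'v \<Rightarrow> 'v"
  assumes M: "module sc"
    and addA: "\<forall>x y. T (Suc a) (x + y) = T (Suc a) x + T (Suc a) y"
    and homA: "\<forall>c x. T (Suc a) (sc c x) = sc c (T (Suc a) x)"
    and addB: "\<forall>x y. T (Suc b) (x + y) = T (Suc b) x + T (Suc b) y"
    and homB: "\<forall>c x. T (Suc b) (sc c x) = sc c (T (Suc b) x)"
    and comm: "\<forall>x. T (Suc a) (T (Suc b) x) = T (Suc b) (T (Suc a) x)"
    and ab: "Suc a < b" and a1: "1 \<le> a" and bn: "Suc b \<le> n"
  shows "tens_rep q qh n sc T (Suc a) (tens_rep q qh n sc T (Suc b) f) k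
       = tens_rep q qh n sc T (Suc b) (tens_rep q qh n sc T (Suc a) f) k"
proof -
  have dA: "T (Suc a) (u - v) = T (Suc a) u - T (Suc a) v" for u v
    by (metis addA add_diff_cancel diff_add_cancel)
  have dB: "T (Suc b) (u - v) = T (Suc b) u - T (Suc b) v" for u v
    by (metis addB add_diff_cancel diff_add_cancel)
  have zA: "T (Suc a) 0 = 0" by (metis addA add_cancel_right_right)
  have zB: "T (Suc b) 0 = 0" by (metis addB add_cancel_right_right)
  have ne: "a \<noteq> b" "b \<noteq> a" "Suc a \<noteq> b" "b \<noteq> Suc a" "a \<noteq> Suc b" "Suc b \<noteq> a"
     "Suc a \<noteq> Suc b" "Suc b \<noteq> Suc a" using ab by auto
  consider "k = a" | "k = Suc a" | "k = b" | "k = Suc b"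
    | "k \<noteq> a" "k \<noteq> Suc a" "k \<noteq> b" "k \<noteq> Suc b" by blast
  then show ?thesis
    using a1 bn ab by cases (simp_all add: tr_app addA homA addB homB dA dB zA zB comm ne)
qed

theorem proposition2:
  fixes q qh :: complex and n :: nat
    and sc :: "complex \<Rightarrow> 'v::ab_group_add \<Rightarrow> 'v" and T :: "nat \<Rightarrow> 'v \<Rightarrow> 'v"
  assumes "q \<noteq> 0" and "q \<noteq> 1" and "q \<noteq> -1"
    and "\<forall>m::nat. m > 0 \<longrightarrow> q ^ m \<noteq> 1"
    and "qh ^ 2 = q"
    and "n \<ge> 2"
    and "cvs sc"
    and "is_rep_Uq q n sc UNIV T"
  shows "is_rep_Uq q n (tens_scale sc) (tens_space n) (tens_rep q qh n sc T)"
proof -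
  have M: "module sc" using assms(7) by (rule cvs_module)
  have qq: "q = qh^2" using assms(5) by simp
  have qh0: "qh \<noteq> 0" using assms(1) qq by auto
  note R = assms(8)[unfolded is_rep_Uq_def]
  have lin: "\<And>j. j \<in> {2..n} \<Longrightarrow> (\<forall>x y. T j (x + y) = T j x + T j y) \<and> (\<forall>c x. T j (sc c x) = sc c (T j x))"
    using bspec[OF conjunct1[OF R]] by simp
  have r1: "\<And>j. j \<in> {3..n} \<Longrightarrow> \<forall>x. T j (T j (T (j-1) x)) + T (j-1) (T j (T j x))
          - sc (q + inverse q) (T j (T (j-1) (T j x))) = - T (j-1) x"
    using bspec[OF conjunct1[OF conjunct2[OF R]]] by simp
  have r2: "\<And>j. j \<in> {3..n} \<Longrightarrow> \<forall>x. T (j-1) (T (j-1) (T j x)) + T j (T (j-1) (T (j-1) x))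
          - sc (q + inverse q) (T (j-1) (T j (T (j-1) x))) = - T j x"
    using bspec[OF conjunct1[OF conjunct2[OF conjunct2[OF R]]]] by simp
  have cm: "\<And>i j. i \<in> {2..n} \<Longrightarrow> j \<in> {2..n} \<Longrightarrow> i + 1 < j \<Longrightarrow> \<forall>x. T i (T j x) = T j (T i x)"
    using conjunct2[OF conjunct2[OF conjunct2[OF R]]] by simp
  have P1: "\<forall>x\<in>tens_space n. tens_rep q qh n sc T j x \<in> tens_space n" for j
    by (simp add: tens_space_def tr_app)
  have P2: "\<forall>x\<in>tens_space n. \<forall>y\<in>tens_space n. tens_rep q qh n sc T j (x + y)
      = tens_rep q qh n sc T j x + tens_rep q qh n sc T j y" if j: "j \<in> {2..n}" for j
  proof (intro ballI ext)
    fix x y :: "nat \<Rightarrow> 'v" and k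
    have dT: "T j (u - v) = T j u - T j v" for u v
      using lin[OF j] by (metis add_diff_cancel diff_add_cancel)
    show "tens_rep q qh n sc T j (x + y) k = (tens_rep q qh n sc T j x + tens_rep q qh n sc T j y) k"
      using lin[OF j]
      by (simp add: tr_app module.scale_right_distrib[OF M] module.scale_right_diff_distrib[OF M] algebra_simps)
  qed
  have P3: "\<forall>c. \<forall>x\<in>tens_space n. tens_rep q qh n sc T j (tens_scale sc c x)
      = tens_scale sc c (tens_rep q qh n sc T j x)" if j: "j \<in> {2..n}" for j
  proof (intro allI ballI ext)
    fix c and x :: "nat \<Rightarrow> 'v" and k
    show "tens_rep q qh n sc T j (tens_scale sc c x) k = tens_scale sc c (tens_rep q qh n sc T j x) k"
      using lin[OF j]
      by (simp add: tr_app tens_scale_def module.scale_right_distrib[OF M] module.scale_right_diff_distrib[OF M]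
          module.scale_zero_right[OF M] module.scale_scale[OF M] mult.commute)
  qed
  have P4: "\<forall>x\<in>tens_space n.
        tens_rep q qh n sc T j (tens_rep q qh n sc T j (tens_rep q qh n sc T (j-1) x))
      + tens_rep q qh n sc T (j-1) (tens_rep q qh n sc T j (tens_rep q qh n sc T j x))
      - tens_scale sc (q + inverse q) (tens_rep q qh n sc T j (tens_rep q qh n sc T (j-1) (tens_rep q qh n sc T j x)))
      = - tens_rep q qh n sc T (j-1) x" if j: "j \<in> {3..n}" for j
  proof (intro ballI ext)
    fix x :: "nat \<Rightarrow> 'v" and k
    have "\<exists>m. j = Suc (Suc (Suc m))" using j by (intro exI[of _ "j - 3"]) auto
    then obtain m where jm: "j = Suc (Suc (Suc m))" by blast
    have jA: "Suc (Suc (Suc m)) \<in> {2..n}" and jB: "Suc (Suc m) \<in> {2..n}" using j jm by auto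
    have rr: "\<forall>x. T (Suc (Suc (Suc m))) (T (Suc (Suc (Suc m))) (T (Suc (Suc m)) x))
       + T (Suc (Suc m)) (T (Suc (Suc (Suc m))) (T (Suc (Suc (Suc m))) x))
       - sc (q + inverse q) (T (Suc (Suc (Suc m))) (T (Suc (Suc m)) (T (Suc (Suc (Suc m))) x)))
       = - T (Suc (Suc m)) x" using r1[OF j] unfolding jm by simp
    have nn: "Suc (Suc (Suc m)) \<le> n" using j jm by simp
    show "(tens_rep q qh n sc T j (tens_rep q qh n sc T j (tens_rep q qh n sc T (j-1) x))
      + tens_rep q qh n sc T (j-1) (tens_rep q qh n sc T j (tens_rep q qh n sc T j x))
      - tens_scale sc (q + inverse q) (tens_rep q qh n sc T j (tens_rep q qh n sc T (j-1) (tens_rep q qh n sc T j x)))) k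
      = (- tens_rep q qh n sc T (j-1) x) k"
      using tens_rel1[OF M qq qh0 conjunct1[OF lin[OF jA]] conjunct2[OF lin[OF jA]]
          conjunct1[OF lin[OF jB]] conjunct2[OF lin[OF jB]] rr nn, of x k]
      unfolding jm by (simp add: tens_scale_def)
  qed
  have P5: "\<forall>x\<in>tens_space n.
        tens_rep q qh n sc T (j-1) (tens_rep q qh n sc T (j-1) (tens_rep q qh n sc T j x))
      + tens_rep q qh n sc T j (tens_rep q qh n sc T (j-1) (tens_rep q qh n sc T (j-1) x))
      - tens_scale sc (q + inverse q) (tens_rep q qh n sc T (j-1) (tens_rep q qh n sc T j (tens_rep q qh n sc T (j-1) x)))
      = - tens_rep q qh n sc T j x" if j: "j \<in> {3..n}" for j
  proof (intro ballI ext)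
    fix x :: "nat \<Rightarrow> 'v" and k
    have "\<exists>m. j = Suc (Suc (Suc m))" using j by (intro exI[of _ "j - 3"]) auto
    then obtain m where jm: "j = Suc (Suc (Suc m))" by blast
    have jA: "Suc (Suc (Suc m)) \<in> {2..n}" and jB: "Suc (Suc m) \<in> {2..n}" using j jm by auto
    have rr: "\<forall>x. T (Suc (Suc m)) (T (Suc (Suc m)) (T (Suc (Suc (Suc m))) x))
       + T (Suc (Suc (Suc m))) (T (Suc (Suc m)) (T (Suc (Suc m)) x))
       - sc (q + inverse q) (T (Suc (Suc m)) (T (Suc (Suc (Suc m))) (T (Suc (Suc m)) x)))
       = - T (Suc (Suc (Suc m))) x" using r2[OF j] unfolding jm by simp
    have nn: "Suc (Suc (Suc m)) \<le> n" using j jm by simp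
    show "(tens_rep q qh n sc T (j-1) (tens_rep q qh n sc T (j-1) (tens_rep q qh n sc T j x))
      + tens_rep q qh n sc T j (tens_rep q qh n sc T (j-1) (tens_rep q qh n sc T (j-1) x))
      - tens_scale sc (q + inverse q) (tens_rep q qh n sc T (j-1) (tens_rep q qh n sc T j (tens_rep q qh n sc T (j-1) x)))) k
      = (- tens_rep q qh n sc T j x) k"
      using tens_rel2[OF M qq qh0 conjunct1[OF lin[OF jA]] conjunct2[OF lin[OF jA]]
          conjunct1[OF lin[OF jB]] conjunct2[OF lin[OF jB]] rr nn, of x k]
      unfolding jm by (simp add: tens_scale_def)
  qed
  have P6: "\<forall>x\<in>tens_space n. tens_rep q qh n sc T i (tens_rep q qh n sc T j x)
      = tens_rep q qh n sc T j (tens_rep q qh n sc T i x)"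
    if i: "i \<in> {2..n}" and j: "j \<in> {2..n}" and ij: "i + 1 < j" for i j
  proof (intro ballI ext)
    fix x :: "nat \<Rightarrow> 'v" and k
    obtain a where ia: "i = Suc a" using i by (cases i) auto
    obtain b where jb: "j = Suc b" using j by (cases j) auto
    note LA = lin[OF i, unfolded ia]
    note LB = lin[OF j, unfolded jb]
    note CM = cm[OF i j ij, unfolded ia jb]
    have a1: "1 \<le> a" using i ia by simp
    have bn: "Suc b \<le> n" using j jb by simp
    have ab: "Suc a < b" using ij ia jb by simp
    show "tens_rep q qh n sc T i (tens_rep q qh n sc T j x) k = tens_rep q qh n sc T j (tens_rep q qh n sc T i x) k"
      unfolding ia jb
      by (rule tens_comm[OF M conjunct1[OF LA] conjunct2[OF LA] conjunct1[OF LB] conjunct2[OF LB] CM ab a1 bn])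
  qed
  show ?thesis
    unfolding is_rep_Uq_def
    apply (intro conjI)
    subgoal using P1 P2 P3 by blast
    subgoal using P4 by blast
    subgoal using P5 by blast
    apply (intro ballI impI)
    apply (erule disjE)
    subgoal for i j using P6 by blast
    subgoal for i j using P6[of j i] by auto
    done
qed

end
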